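(* Let $F$ be a field and let $G,H$ be unital associative $F$-algebras such that $[g_1,g_2,g_3]=0$ for all $g_i\in G$ and $[h_1,h_2,h_3]=0$ for all $h_j\in H$. Let $m',n'\ge 1$ be integers and let $g_i,g'_i\in G$, $h_j,h'_j\in H$. In $G\otimes_F H$ put $v_1=g_1\otimes 1$, $v_i=g_i\otimes h_i$ for $i=2,\dots,2m'-1$, $v_{2m'}=g_{2m'}\otimes 1$, and $w_1=g'_1\otimes 1$, $w_j=g'_j\otimes h'_j$ for $j=2,\dots,2n'+1$. Then \[ [v_1,\dots,v_{2m'}]=[g_1,g_2][g_3,g_4]\cdots[g_{2m'-1},g_{2m'}]\otimes [h_2,h_3][h_4,h_5]\cdots[h_{2m'-2},h_{2m'-1}], \] \[ [w_1,\dots,w_{2n'+1}]=[g'_1,g'_2]\cdots[g'_{2n'-1},g'_{2n'}]\,g'_{2n'+1}\otimes [h'_2,h'_3][h'_4,h'_5]\cdots[h'_{2n'},h'_{2n'+1}], \] where an empty product of commutators equals $1$.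
   Context: Left-normed commutators: $[a_1,a_2]=a_1a_2-a_2a_1$, $[a_1,\dots,a_{n-1},a_n]=[[a_1,\dots,a_{n-1}],a_n]$ for $n\ge 3$. $G\otimes_F H$ is the tensor product algebra with $(g\otimes h)(g'\otimes h')=gg'\otimes hh'$. *)

theory Defs
  imports Main "HOL-Analysis.Analysis"
begin

definition rcomm :: "'a::ring \<Rightarrow> 'a \<Rightarrow> 'a" where
  "rcomm a b = a * b - b * a"

definition is_algebra :: "('f::field \<Rightarrow> 'g::ring_1 \<Rightarrow> 'g) \<Rightarrow> bool" where
  "is_algebra sc \<longleftrightarrow> Vector_Spaces.vector_space sc \<and>
     (\<forall>c x y. sc c (x * y) = sc c x * y \<and> sc c (x * y) = x * sc c y)"

text \<open>The tensor product G \<otimes>_F H is realised as the quotient of the free F-vector space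
  on G \<times> H (finitely supported functions G \<times> H \<Rightarrow> F) by the subspace spanned by the
  bilinearity relations.  The algebra structure comes from the bilinear extension of
  (g,h)(g',h') = (gg',hh'), i.e. convolution; the bilinearity subspace is an ideal,
  and the product on the quotient is the induced one.  Equality in G \<otimes>_F H of the
  classes of two elements p, q is congruence of p and q modulo that subspace.\<close>

definition fsupp :: "('x \<Rightarrow> 'f::zero) \<Rightarrow> 'x set" where
  "fsupp p = {x. p x \<noteq> 0}"

definition free_vs :: "('x \<Rightarrow> 'f::zero) set" where
  "free_vs = {p. finite (fsupp p)}"

definition delta :: "'x \<Rightarrow> 'x \<Rightarrow> 'f::{zero,one}" where
  "delta a = (\<lambda>x. if x = a then 1 else 0)"

definition tens :: "'g \<Rightarrow> 'h \<Rightarrow> ('g \<times> 'h \<Rightarrow> 'f::{zero,one})" where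
  "tens g h = delta (g, h)"

definition fadd :: "('x \<Rightarrow> 'f::field) \<Rightarrow> ('x \<Rightarrow> 'f) \<Rightarrow> ('x \<Rightarrow> 'f)" where
  "fadd p q = (\<lambda>x. p x + q x)"

definition fsub :: "('x \<Rightarrow> 'f::field) \<Rightarrow> ('x \<Rightarrow> 'f) \<Rightarrow> ('x \<Rightarrow> 'f)" where
  "fsub p q = (\<lambda>x. p x - q x)"

definition fscale :: "'f::field \<Rightarrow> ('x \<Rightarrow> 'f) \<Rightarrow> ('x \<Rightarrow> 'f)" where
  "fscale c p = (\<lambda>x. c * p x)"

definition tmult :: "('g::ring_1 \<times> 'h::ring_1 \<Rightarrow> 'f::field) \<Rightarrow> ('g \<times> 'h \<Rightarrow> 'f) \<Rightarrow> ('g \<times> 'h \<Rightarrow> 'f)" where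
  "tmult p q = (\<lambda>z. \<Sum>(x, y) \<in> {(x, y). x \<in> fsupp p \<and> y \<in> fsupp q \<and>
                     (fst x * fst y, snd x * snd y) = z}. p x * q y)"

definition tcomm :: "('g::ring_1 \<times> 'h::ring_1 \<Rightarrow> 'f::field) \<Rightarrow> ('g \<times> 'h \<Rightarrow> 'f) \<Rightarrow> ('g \<times> 'h \<Rightarrow> 'f)" where
  "tcomm p q = fsub (tmult p q) (tmult q p)"

definition tlcomm :: "('g::ring_1 \<times> 'h::ring_1 \<Rightarrow> 'f::field) list \<Rightarrow> ('g \<times> 'h \<Rightarrow> 'f)" where
  "tlcomm xs = foldl tcomm (hd xs) (tl xs)"

definition tens_rels :: "('f::field \<Rightarrow> 'g::ring_1 \<Rightarrow> 'g) \<Rightarrow> ('f \<Rightarrow> 'h::ring_1 \<Rightarrow> 'h)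
    \<Rightarrow> ('g \<times> 'h \<Rightarrow> 'f) set" where
  "tens_rels sG sH =
     {fsub (tens (g + g') h) (fadd (tens g h) (tens g' h)) | g g' h. True} \<union>
     {fsub (tens g (h + h')) (fadd (tens g h) (tens g h')) | g h h'. True} \<union>
     {fsub (tens (sG c g) h) (fscale c (tens g h)) | c g h. True} \<union>
     {fsub (tens g (sH c h)) (fscale c (tens g h)) | c g h. True}"

definition tens_null :: "('f::field \<Rightarrow> 'g::ring_1 \<Rightarrow> 'g) \<Rightarrow> ('f \<Rightarrow> 'h::ring_1 \<Rightarrow> 'h)
    \<Rightarrow> ('g \<times> 'h \<Rightarrow> 'f) set" where
  "tens_null sG sH = {(\<lambda>x. \<Sum>a\<in>t. r a * a x) | t r. finite t \<and> t \<subseteq> tens_rels sG sH}"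

definition tens_eq :: "('f::field \<Rightarrow> 'g::ring_1 \<Rightarrow> 'g) \<Rightarrow> ('f \<Rightarrow> 'h::ring_1 \<Rightarrow> 'h)
    \<Rightarrow> ('g \<times> 'h \<Rightarrow> 'f) \<Rightarrow> ('g \<times> 'h \<Rightarrow> 'f) \<Rightarrow> bool" where
  "tens_eq sG sH p q \<longleftrightarrow> fsub p q \<in> tens_null sG sH"

end

theory Submission
  imports Defs
begin

definition push :: "('x \<Rightarrow> 'y) \<Rightarrow> ('x \<Rightarrow> 'f::field) \<Rightarrow> ('y \<Rightarrow> 'f)" where
  "push f p = (\<lambda>z. \<Sum>x \<in> {x \<in> fsupp p. f x = z}. p x)"

lemma fsupp_delta[simp]: "fsupp (delta a :: 'x \<Rightarrow> 'f::zero_neq_one) = {a}"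
  unfolding fsupp_def delta_def by auto

lemma fsupp_tens[simp]: "fsupp (tens g h :: _ \<Rightarrow> 'f::zero_neq_one) = {(g,h)}"
  unfolding tens_def by simp

lemma push_eq:
  assumes "finite S" "fsupp p \<subseteq> S"
  shows "push f p z = (\<Sum>x \<in> {x\<in>S. f x = z}. p x)"
  unfolding push_def
  by (rule sum.mono_neutral_left) (use assms in \<open>auto simp: fsupp_def\<close>)

lemma push_delta: "push f (delta a :: _ \<Rightarrow> 'f::field) = delta (f a)"
proof
  fix z
  show "push f (delta a :: _ \<Rightarrow> 'f) z = delta (f a) z"
  proof (cases "f a = z")
    case True
    then have "{x \<in> fsupp (delta a :: _ \<Rightarrow> 'f). f x = z} = {a}" by auto
    then show ?thesis using True unfolding push_def by (simp add: delta_def)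
  next
    case False
    then have e: "{x \<in> fsupp (delta a :: _ \<Rightarrow> 'f). f x = z} = {}" by auto
    have "push f (delta a :: _ \<Rightarrow> 'f) z = 0" unfolding push_def by (simp only: e sum.empty)
    then show ?thesis using False by (simp add: delta_def)
  qed
qed

lemma push_tens: "push (\<lambda>x. (\<phi> (fst x), \<psi> (snd x))) (tens g h :: _ \<Rightarrow> 'f::field) = tens (\<phi> g) (\<psi> h)"
  unfolding tens_def by (simp add: push_delta)

lemma fsupp_fsub: "fsupp (fsub p q) \<subseteq> fsupp p \<union> fsupp q"
  unfolding fsupp_def fsub_def by auto
lemma fsupp_fadd: "fsupp (fadd p q) \<subseteq> fsupp p \<union> fsupp q"
  unfolding fsupp_def fadd_def by auto
lemma fsupp_fscale: "fsupp (fscale c p) \<subseteq> fsupp p"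
  unfolding fsupp_def fscale_def by auto
lemma fsupp_push: "fsupp (push f p) \<subseteq> f ` fsupp p"
proof
  fix z assume z: "z \<in> fsupp (push f p)"
  show "z \<in> f ` fsupp p"
  proof (rule ccontr)
    assume "z \<notin> f ` fsupp p"
    then have e: "{x \<in> fsupp p. f x = z} = {}" by auto
    have "push f p z = 0" unfolding push_def by (simp only: e sum.empty)
    then show False using z unfolding fsupp_def by simp
  qed
qed

lemma push_fsub:
  assumes "finite (fsupp p)" "finite (fsupp q)"
  shows "push f (fsub p q) = fsub (push f p) (push f q)"
proof
  fix z
  let ?S = "fsupp p \<union> fsupp q"
  have "push f (fsub p q) z = (\<Sum>x \<in> {x\<in>?S. f x = z}. fsub p q x)"
    by (rule push_eq) (use assms fsupp_fsub[of p q] in auto)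
  also have "\<dots> = (\<Sum>x \<in> {x\<in>?S. f x = z}. p x) - (\<Sum>x \<in> {x\<in>?S. f x = z}. q x)"
    unfolding fsub_def by (simp add: sum_subtractf)
  also have "\<dots> = push f p z - push f q z"
    using assms by (simp only: push_eq[of ?S p f z] push_eq[of ?S q f z] finite_Un Un_upper1 Un_upper2)
  finally show "push f (fsub p q) z = fsub (push f p) (push f q) z" unfolding fsub_def .
qed

lemma push_fadd:
  assumes "finite (fsupp p)" "finite (fsupp q)"
  shows "push f (fadd p q) = fadd (push f p) (push f q)"
proof
  fix z
  let ?S = "fsupp p \<union> fsupp q"
  have "push f (fadd p q) z = (\<Sum>x \<in> {x\<in>?S. f x = z}. fadd p q x)"
    by (rule push_eq) (use assms fsupp_fadd[of p q] in auto)
  also have "\<dots> = (\<Sum>x \<in> {x\<in>?S. f x = z}. p x) + (\<Sum>x \<in> {x\<in>?S. f x = z}. q x)"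
    unfolding fadd_def by (simp add: sum.distrib)
  also have "\<dots> = push f p z + push f q z"
    using assms by (simp only: push_eq[of ?S p f z] push_eq[of ?S q f z] finite_Un Un_upper1 Un_upper2)
  finally show "push f (fadd p q) z = fadd (push f p) (push f q) z" unfolding fadd_def .
qed

lemma push_fscale:
  assumes "finite (fsupp p)"
  shows "push f (fscale c p) = fscale c (push f p)"
proof
  fix z
  have "push f (fscale c p) z = (\<Sum>x \<in> {x\<in>fsupp p. f x = z}. fscale c p x)"
    by (rule push_eq) (use assms fsupp_fscale[of c p] in auto)
  also have "\<dots> = c * push f p z"
    unfolding fscale_def push_def by (simp add: sum_distrib_left)
  finally show "push f (fscale c p) z = fscale c (push f p) z" unfolding fscale_def .
qed

lemma push_lincomb:
  assumes "finite t" "\<forall>a\<in>t. finite (fsupp a)"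
  shows "push f (\<lambda>x. \<Sum>a\<in>t. r a * a x) = (\<lambda>z. \<Sum>a\<in>t. r a * push f a z)"
proof
  fix z
  let ?S = "\<Union>(fsupp ` t)"
  have fin: "finite ?S" using assms by auto
  have "fsupp (\<lambda>x. \<Sum>a\<in>t. r a * a x) \<subseteq> ?S"
  proof
    fix x assume "x \<in> fsupp (\<lambda>x. \<Sum>a\<in>t. r a * a x)"
    then have "(\<Sum>a\<in>t. r a * a x) \<noteq> 0" unfolding fsupp_def by simp
    then obtain a where "a \<in> t" "r a * a x \<noteq> 0" using sum.neutral[of t "\<lambda>a. r a * a x"] by blast
    then show "x \<in> ?S" unfolding fsupp_def by auto
  qed
  then have "push f (\<lambda>x. \<Sum>a\<in>t. r a * a x) z = (\<Sum>x \<in> {x\<in>?S. f x = z}. \<Sum>a\<in>t. r a * a x)"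
    by (rule push_eq[OF fin])
  also have "\<dots> = (\<Sum>a\<in>t. r a * (\<Sum>x \<in> {x\<in>?S. f x = z}. a x))"
    by (subst sum.swap) (simp add: sum_distrib_left)
  also have "\<dots> = (\<Sum>a\<in>t. r a * push f a z)"
  proof (rule sum.cong[OF refl])
    fix a assume "a \<in> t"
    then have "fsupp a \<subseteq> ?S" by auto
    then show "r a * (\<Sum>x \<in> {x\<in>?S. f x = z}. a x) = r a * push f a z"
      using push_eq[OF fin, of a f z] by simp
  qed
  finally show "push f (\<lambda>x. \<Sum>a\<in>t. r a * a x) z = (\<Sum>a\<in>t. r a * push f a z)" .
qed


lemma tn_iff: "p \<in> tens_null sG sH \<longleftrightarrow>
   (\<exists>t r. finite t \<and> t \<subseteq> tens_rels sG sH \<and> p = (\<lambda>x. \<Sum>a\<in>t. r a * a x))"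
  unfolding tens_null_def by blast

lemma tn_zero: "(\<lambda>x. 0) \<in> tens_null sG sH"
  unfolding tn_iff by (rule exI[of _ "{}"]) auto

lemma tn_rel: "a \<in> tens_rels sG sH \<Longrightarrow> a \<in> tens_null sG sH"
  unfolding tn_iff by (rule exI[of _ "{a}"], rule exI[of _ "\<lambda>_. 1"]) auto

lemma tn_scale: "p \<in> tens_null sG sH \<Longrightarrow> fscale c p \<in> tens_null sG sH"
  unfolding tn_iff fscale_def
  by (auto simp: sum_distrib_left mult.assoc intro!: exI[of _ "\<lambda>a. c * _ a"])

lemma tn_add: assumes "p \<in> tens_null sG sH" "q \<in> tens_null sG sH"
  shows "fadd p q \<in> tens_null sG sH"
proof -
  obtain t1 r1 where 1: "finite t1" "t1 \<subseteq> tens_rels sG sH" "p = (\<lambda>x. \<Sum>a\<in>t1. r1 a * a x)"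
    using assms(1) unfolding tn_iff by blast
  obtain t2 r2 where 2: "finite t2" "t2 \<subseteq> tens_rels sG sH" "q = (\<lambda>x. \<Sum>a\<in>t2. r2 a * a x)"
    using assms(2) unfolding tn_iff by blast
  define r where "r a = (if a \<in> t1 then r1 a else 0) + (if a \<in> t2 then r2 a else 0)" for a
  have "fadd p q = (\<lambda>x. \<Sum>a\<in>t1\<union>t2. r a * a x)"
  proof
    fix x
    have "(\<Sum>a\<in>t1\<union>t2. r a * a x) = (\<Sum>a\<in>t1\<union>t2. (if a \<in> t1 then r1 a * a x else 0))
          + (\<Sum>a\<in>t1\<union>t2. (if a \<in> t2 then r2 a * a x else 0))"
      unfolding r_def by (subst sum.distrib[symmetric]) (rule sum.cong, auto simp: distrib_right)
    also have "\<dots> = (\<Sum>a\<in>t1. r1 a * a x) + (\<Sum>a\<in>t2. r2 a * a x)"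
      using 1(1) 2(1) by (simp add: sum.If_cases Int_absorb1 Int_absorb2)
    finally show "fadd p q x = (\<Sum>a\<in>t1\<union>t2. r a * a x)" using 1(3) 2(3) unfolding fadd_def by simp
  qed
  then show ?thesis unfolding tn_iff using 1 2 by blast
qed

lemma tn_sub: assumes "p \<in> tens_null sG sH" "q \<in> tens_null sG sH"
  shows "fsub p q \<in> tens_null sG sH"
proof -
  have "fsub p q = fadd p (fscale (-1) q)" unfolding fsub_def fadd_def fscale_def by auto
  then show ?thesis using tn_add[OF assms(1) tn_scale[OF assms(2)]] by simp
qed

lemma tn_sum: assumes "finite t" "\<forall>a\<in>t. F a \<in> tens_null sG sH"
  shows "(\<lambda>x. \<Sum>a\<in>t. r a * F a x) \<in> tens_null sG sH"
  using assms
proof (induction t rule: finite_induct)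
  case empty then show ?case using tn_zero by simp
next
  case (insert a t)
  have e: "(\<lambda>x. \<Sum>a\<in>insert a t. r a * F a x) = fadd (fscale (r a) (F a)) (\<lambda>x. \<Sum>a\<in>t. r a * F a x)"
    using insert(1,2) unfolding fadd_def fscale_def by auto
  show ?case unfolding e
    by (rule tn_add[OF tn_scale]) (use insert in auto)
qed

lemma fin_tens[simp]: "finite (fsupp (tens g h :: _ \<Rightarrow> 'f::field))" by simp
lemma fin_fsub[simp]: "finite (fsupp p) \<Longrightarrow> finite (fsupp q) \<Longrightarrow> finite (fsupp (fsub p q))"
  by (meson finite_UnI finite_subset fsupp_fsub)
lemma fin_fadd[simp]: "finite (fsupp p) \<Longrightarrow> finite (fsupp q) \<Longrightarrow> finite (fsupp (fadd p q))"
  by (meson finite_UnI finite_subset fsupp_fadd)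
lemma fin_fscale[simp]: "finite (fsupp p) \<Longrightarrow> finite (fsupp (fscale c p))"
  by (meson finite_subset fsupp_fscale)
lemma fin_push[simp]: "finite (fsupp p) \<Longrightarrow> finite (fsupp (push f p))"
  by (meson finite_imageI finite_subset fsupp_push)

lemma rel1: "fsub (tens (g + g') h) (fadd (tens g h) (tens g' h)) \<in> tens_rels sG sH"
  unfolding tens_rels_def by (rule UnI1, rule UnI1, rule UnI1, intro CollectI exI conjI TrueI, rule refl)
lemma rel2: "fsub (tens g (h + h')) (fadd (tens g h) (tens g h')) \<in> tens_rels sG sH"
  unfolding tens_rels_def by (rule UnI1, rule UnI1, rule UnI2, intro CollectI exI conjI TrueI, rule refl)
lemma rel3: "fsub (tens (sG c g) h) (fscale c (tens g h)) \<in> tens_rels sG sH"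
  unfolding tens_rels_def by (rule UnI1, rule UnI2, intro CollectI exI conjI TrueI, rule refl)
lemma rel4: "fsub (tens g (sH c h)) (fscale c (tens g h)) \<in> tens_rels sG sH"
  unfolding tens_rels_def by (rule UnI2, intro CollectI exI conjI TrueI, rule refl)

lemma finite_rel: "finite (fsupp (a :: _ \<Rightarrow> 'f::field))" if "a \<in> tens_rels sG sH"
proof -
  have "a \<in> {fsub (tens (g + g') h) (fadd (tens g h) (tens g' h)) | g g' h. True} \<union>
     {fsub (tens g (h + h')) (fadd (tens g h) (tens g h')) | g h h'. True} \<union>
     {fsub (tens (sG c g) h) (fscale c (tens g h)) | c g h. True} \<union>
     {fsub (tens g (sH c h)) (fscale c (tens g h)) | c g h. True}" using that unfolding tens_rels_def .
  then show ?thesis by (elim UnE CollectE exE conjE) simp_all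
qed

lemma finite_tn: assumes "p \<in> tens_null sG sH" shows "finite (fsupp p)"
proof -
  obtain t r where 1: "finite t" "t \<subseteq> tens_rels sG sH" "p = (\<lambda>x. \<Sum>a\<in>t. r a * a x)"
    using assms unfolding tn_iff by blast
  have "fsupp p \<subseteq> \<Union>(fsupp ` t)"
  proof
    fix x assume "x \<in> fsupp p"
    then have "(\<Sum>a\<in>t. r a * a x) \<noteq> 0" using 1 unfolding fsupp_def by simp
    then obtain a where "a \<in> t" "r a * a x \<noteq> 0" using sum.neutral[of t "\<lambda>a. r a * a x"] by blast
    then show "x \<in> \<Union>(fsupp ` t)" unfolding fsupp_def by auto
  qed
  moreover have "finite (\<Union>(fsupp ` t))" using 1 finite_rel by auto
  ultimately show ?thesis by (rule finite_subset)
qed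

lemma push_rel:
  assumes phi: "\<And>u v. \<phi> (u+v) = \<phi> u + \<phi> v" "\<And>k u. \<phi> (sG k u) = sG k (\<phi> u)"
    and psi: "\<And>u v. \<psi> (u+v) = \<psi> u + \<psi> v" "\<And>k u. \<psi> (sH k u) = sH k (\<psi> u)"
    and a: "a \<in> tens_rels sG sH"
  shows "push (\<lambda>x. (\<phi> (fst x), \<psi> (snd x))) a \<in> tens_rels sG sH"
proof -
  have "a \<in> {fsub (tens (g + g') h) (fadd (tens g h) (tens g' h)) | g g' h. True} \<union>
     {fsub (tens g (h + h')) (fadd (tens g h) (tens g h')) | g h h'. True} \<union>
     {fsub (tens (sG c g) h) (fscale c (tens g h)) | c g h. True} \<union>
     {fsub (tens g (sH c h)) (fscale c (tens g h)) | c g h. True}" using a unfolding tens_rels_def .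
  then show ?thesis
    by (elim UnE CollectE exE conjE)
      (simp_all add: push_fsub push_fadd push_fscale push_tens phi psi rel1 rel2 rel3 rel4)
qed

lemma push_tn:
  assumes phi: "\<And>u v. \<phi> (u+v) = \<phi> u + \<phi> v" "\<And>k u. \<phi> (sG k u) = sG k (\<phi> u)"
    and psi: "\<And>u v. \<psi> (u+v) = \<psi> u + \<psi> v" "\<And>k u. \<psi> (sH k u) = sH k (\<psi> u)"
    and p: "p \<in> tens_null sG sH"
  shows "push (\<lambda>x. (\<phi> (fst x), \<psi> (snd x))) p \<in> tens_null sG sH"
proof -
  obtain t r where 1: "finite t" "t \<subseteq> tens_rels sG sH" "p = (\<lambda>x. \<Sum>a\<in>t. r a * a x)"
    using p unfolding tn_iff by blast
  have "push (\<lambda>x. (\<phi> (fst x), \<psi> (snd x))) p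
     = (\<lambda>z. \<Sum>a\<in>t. r a * push (\<lambda>x. (\<phi> (fst x), \<psi> (snd x))) a z)"
    unfolding 1(3)
  proof (rule push_lincomb[OF 1(1)], intro ballI)
    fix a assume "a \<in> t"
    then show "finite (fsupp a)" by (rule finite_rel[OF subsetD[OF 1(2)]])
  qed
  also have "\<dots> \<in> tens_null sG sH"
  proof (rule tn_sum[where F="\<lambda>a. push (\<lambda>x. (\<phi> (fst x), \<psi> (snd x))) a", OF 1(1)], intro ballI)
    fix a assume "a \<in> t"
    then have "a \<in> tens_rels sG sH" using 1(2) by auto
    then show "push (\<lambda>x. (\<phi> (fst x), \<psi> (snd x))) a \<in> tens_null sG sH"
      by (rule tn_rel[OF push_rel[where \<phi>=\<phi> and \<psi>=\<psi> and sG=sG and sH=sH, OF phi(1) phi(2) psi(1) psi(2)]])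
  qed
  finally show ?thesis .
qed


lemma tmult_tens_right:
  fixes p :: "'g::ring_1 \<times> 'h::ring_1 \<Rightarrow> 'f::field"
  shows "tmult p (tens c d) = push (\<lambda>x. (fst x * c, snd x * d)) p"
proof
  fix z
  have e: "{(x, y). x \<in> fsupp p \<and> y \<in> fsupp (tens c d :: 'g \<times> 'h \<Rightarrow> 'f) \<and> (fst x * fst y, snd x * snd y) = z}
     = (\<lambda>x. (x, (c,d))) ` {x \<in> fsupp p. (fst x * c, snd x * d) = z}" by auto
  show "tmult p (tens c d) z = push (\<lambda>x. (fst x * c, snd x * d)) p z"
    unfolding tmult_def push_def e by (simp add: sum.reindex inj_on_def tens_def delta_def)
qed

lemma tmult_tens_left:
  fixes p :: "'g::ring_1 \<times> 'h::ring_1 \<Rightarrow> 'f::field"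
  shows "tmult (tens c d) p = push (\<lambda>x. (c * fst x, d * snd x)) p"
proof
  fix z
  have e: "{(x, y). x \<in> fsupp (tens c d :: 'g \<times> 'h \<Rightarrow> 'f) \<and> y \<in> fsupp p \<and> (fst x * fst y, snd x * snd y) = z}
     = (\<lambda>y. ((c,d), y)) ` {y \<in> fsupp p. (c * fst y, d * snd y) = z}" by auto
  show "tmult (tens c d) p z = push (\<lambda>x. (c * fst x, d * snd x)) p z"
    unfolding tmult_def push_def e by (simp add: sum.reindex inj_on_def tens_def delta_def)
qed

lemma te_refl: "tens_eq sG sH p p"
  unfolding tens_eq_def fsub_def using tn_zero by simp

lemma te_trans: "tens_eq sG sH p q \<Longrightarrow> tens_eq sG sH q r \<Longrightarrow> tens_eq sG sH p r"
  unfolding tens_eq_def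
proof -
  assume "fsub p q \<in> tens_null sG sH" "fsub q r \<in> tens_null sG sH"
  then have "fadd (fsub p q) (fsub q r) \<in> tens_null sG sH" by (rule tn_add)
  moreover have "fadd (fsub p q) (fsub q r) = fsub p r" unfolding fadd_def fsub_def by auto
  ultimately show "fsub p r \<in> tens_null sG sH" by simp
qed

lemma te_eqI: "p = q \<Longrightarrow> tens_eq sG sH p q" using te_refl by simp

lemma te_sub: "tens_eq sG sH A A' \<Longrightarrow> tens_eq sG sH B B' \<Longrightarrow> tens_eq sG sH (fsub A B) (fsub A' B')"
  unfolding tens_eq_def
proof -
  assume "fsub A A' \<in> tens_null sG sH" "fsub B B' \<in> tens_null sG sH"
  then have "fsub (fsub A A') (fsub B B') \<in> tens_null sG sH" by (rule tn_sub)
  moreover have "fsub (fsub A A') (fsub B B') = fsub (fsub A B) (fsub A' B')" unfolding fsub_def by auto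
  ultimately show "fsub (fsub A B) (fsub A' B') \<in> tens_null sG sH" by simp
qed

lemma te_push:
  assumes phi: "\<And>u v. \<phi> (u+v) = \<phi> u + \<phi> v" "\<And>k u. \<phi> (sG k u) = sG k (\<phi> u)"
    and psi: "\<And>u v. \<psi> (u+v) = \<psi> u + \<psi> v" "\<And>k u. \<psi> (sH k u) = sH k (\<psi> u)"
    and fin: "finite (fsupp p)" "finite (fsupp q)"
    and e: "tens_eq sG sH p q"
  shows "tens_eq sG sH (push (\<lambda>x. (\<phi> (fst x), \<psi> (snd x))) p) (push (\<lambda>x. (\<phi> (fst x), \<psi> (snd x))) q)"
  using push_tn[where \<phi>=\<phi> and \<psi>=\<psi> and sG=sG and sH=sH, OF phi(1) phi(2) psi(1) psi(2) e[unfolded tens_eq_def]]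
  unfolding tens_eq_def push_fsub[OF fin] .

lemma R1: "tens_eq sG sH (fsub (tens X Y1) (tens X Y2)) (tens X (Y1 - Y2))"
proof -
  have "fsub (fsub (tens X Y1) (tens X Y2)) (tens X (Y1 - Y2))
      = fsub (tens X ((Y1 - Y2) + Y2)) (fadd (tens X (Y1 - Y2)) (tens X Y2))"
    unfolding fsub_def fadd_def by (auto simp: fun_eq_iff)
  then show ?thesis unfolding tens_eq_def by (subst \<open>fsub _ _ = _\<close>) (rule tn_rel[OF rel2])
qed

lemma R2: "tens_eq sG sH (fsub (tens X1 Y) (tens X2 Y)) (tens (X1 - X2) Y)"
proof -
  have "fsub (fsub (tens X1 Y) (tens X2 Y)) (tens (X1 - X2) Y)
      = fsub (tens ((X1 - X2) + X2) Y) (fadd (tens (X1 - X2) Y) (tens X2 Y))"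
    unfolding fsub_def fadd_def by (auto simp: fun_eq_iff)
  then show ?thesis unfolding tens_eq_def by (subst \<open>fsub _ _ = _\<close>) (rule tn_rel[OF rel1])
qed

lemma alg_r: "is_algebra s \<Longrightarrow> s k (x * y) = s k x * y" unfolding is_algebra_def by blast
lemma alg_l: "is_algebra s \<Longrightarrow> s k (x * y) = x * s k y" unfolding is_algebra_def by blast

lemma fin_tcomm:
  fixes T :: "'g::ring_1 \<times> 'h::ring_1 \<Rightarrow> 'f::field"
  shows "finite (fsupp T) \<Longrightarrow> finite (fsupp (tcomm T (tens c d)))"
  unfolding tcomm_def tmult_tens_right tmult_tens_left by simp

lemma tcomm_step:
  fixes T :: "'g::ring_1 \<times> 'h::ring_1 \<Rightarrow> 'f::field"
  assumes algG: "is_algebra sG" and algH: "is_algebra sH"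
    and e: "tens_eq sG sH T (tens X Y)" and fin: "finite (fsupp T)"
  shows "tens_eq sG sH (tcomm T (tens c d)) (fsub (tens (X*c) (Y*d)) (tens (c*X) (d*Y)))"
proof -
  have "tens_eq sG sH (push (\<lambda>x. (fst x * c, snd x * d)) T) (push (\<lambda>x. (fst x * c, snd x * d)) (tens X Y))"
    by (rule te_push[where \<phi>="\<lambda>g. g * c" and \<psi>="\<lambda>h. h * d", OF _ _ _ _ fin _ e])
       (simp_all add: distrib_right alg_r[OF algG] alg_r[OF algH])
  moreover
  have "tens_eq sG sH (push (\<lambda>x. (c * fst x, d * snd x)) T) (push (\<lambda>x. (c * fst x, d * snd x)) (tens X Y))"
    by (rule te_push[where \<phi>="\<lambda>g. c * g" and \<psi>="\<lambda>h. d * h", OF _ _ _ _ fin _ e])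
       (simp_all add: distrib_left alg_l[OF algG] alg_l[OF algH])
  ultimately have "tens_eq sG sH (fsub (push (\<lambda>x. (fst x * c, snd x * d)) T) (push (\<lambda>x. (c * fst x, d * snd x)) T))
     (fsub (push (\<lambda>x. (fst x * c, snd x * d)) (tens X Y)) (push (\<lambda>x. (c * fst x, d * snd x)) (tens X Y)))"
    by (rule te_sub)
  then show ?thesis
    unfolding tcomm_def tmult_tens_right tmult_tens_left
      push_tens[of "\<lambda>g. g * c" "\<lambda>h. h * d"] push_tens[of "\<lambda>g. c * g" "\<lambda>h. d * h"] .
qed


definition PP :: "(nat \<Rightarrow> 'g::ring_1) \<Rightarrow> nat \<Rightarrow> 'g" where
  "PP a j = prod_list (map (\<lambda>k. rcomm (a (2 * k - 1)) (a (2 * k))) [1..<j + 1])"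
definition QQ :: "(nat \<Rightarrow> 'h::ring_1) \<Rightarrow> nat \<Rightarrow> 'h" where
  "QQ b j = prod_list (map (\<lambda>k. rcomm (b (2 * k)) (b (2 * k + 1))) [1..<j + 1])"

lemma PP_0: "PP a 0 = 1" unfolding PP_def by simp
lemma QQ_0: "QQ b 0 = 1" unfolding QQ_def by simp
lemma PP_Suc: "PP a (j + 1) = PP a j * rcomm (a (2 * j + 1)) (a (2 * j + 2))"
proof -
  have "[1..<j + 1 + 1] = [1..<j + 1] @ [j + 1]" by simp
  moreover have "2 * (j + 1) - 1 = 2 * j + 1" by simp
  ultimately show ?thesis unfolding PP_def by simp
qed
lemma QQ_Suc: "QQ b (j + 1) = QQ b j * rcomm (b (2 * j + 2)) (b (2 * j + 3))"
proof -
  have "[1..<j + 1 + 1] = [1..<j + 1] @ [j + 1]" by simp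
  then show ?thesis unfolding QQ_def by (simp add: algebra_simps numeral_3_eq_3)
qed

lemma comm_central:
  fixes x y z :: "'a::ring"
  assumes "\<forall>a b c::'a::ring. rcomm (rcomm a b) c = 0"
  shows "rcomm x y * z = z * rcomm x y"
  using assms[rule_format, of x y z] unfolding rcomm_def[of "rcomm x y" z] by (simp add: right_minus_eq)

lemma prod_central: "(\<forall>x\<in>set xs. x * c = c * x) \<Longrightarrow> prod_list xs * c = c * (prod_list xs :: 'a::monoid_mult)"
  by (induction xs) (simp_all, metis mult.assoc)

lemma PP_central: "\<forall>a b c::'g::ring_1. rcomm (rcomm a b) c = 0 \<Longrightarrow> PP (a::nat\<Rightarrow>'g) j * c = c * PP a j"
  unfolding PP_def by (rule prod_central) (auto intro: comm_central)
lemma QQ_central: "\<forall>a b c::'h::ring_1. rcomm (rcomm a b) c = 0 \<Longrightarrow> QQ (b::nat\<Rightarrow>'h) j * c = c * QQ b j"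
  unfolding QQ_def by (rule prod_central) (auto intro: comm_central)

lemma tlcomm_snoc: "xs \<noteq> [] \<Longrightarrow> tlcomm (xs @ [x]) = tcomm (tlcomm xs) x"
  unfolding tlcomm_def by (cases xs) auto

lemma stepOE:
  fixes sG :: "'f::field \<Rightarrow> 'g::ring_1 \<Rightarrow> 'g" and sH :: "'f \<Rightarrow> 'h::ring_1 \<Rightarrow> 'h"
    and a :: "nat \<Rightarrow> 'g" and b :: "nat \<Rightarrow> 'h"
  assumes algG: "is_algebra sG" and algH: "is_algebra sH"
    and nilG: "\<forall>a b c :: 'g. rcomm (rcomm a b) c = 0"
    and nilH: "\<forall>a b c :: 'h. rcomm (rcomm a b) c = 0"
    and IH: "tens_eq sG sH (tlcomm (map (\<lambda>i. tens (a i) (b i)) [1..<2*j+2]) :: 'g \<times> 'h \<Rightarrow> 'f)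
               (tens (PP a j * a (2*j+1)) (QQ b j))"
    and fin: "finite (fsupp (tlcomm (map (\<lambda>i. tens (a i) (b i)) [1..<2*j+2]) :: 'g \<times> 'h \<Rightarrow> 'f))"
  shows "tens_eq sG sH (tlcomm (map (\<lambda>i. tens (a i) (b i)) [1..<2*j+3]) :: 'g \<times> 'h \<Rightarrow> 'f)
               (tens (PP a (j+1)) (QQ b j * b (2*j+2)))
     \<and> finite (fsupp (tlcomm (map (\<lambda>i. tens (a i) (b i)) [1..<2*j+3]) :: 'g \<times> 'h \<Rightarrow> 'f))"
proof -
  let ?F = "\<lambda>i. tens (a i) (b i) :: 'g \<times> 'h \<Rightarrow> 'f"
  let ?T = "tlcomm (map ?F [1..<2*j+2])"
  define P where "P = PP a j"
  define Q where "Q = QQ b j"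
  define a1 where "a1 = a (2*j+1)"
  define c where "c = a (2*j+2)"
  define d where "d = b (2*j+2)"
  have u: "[1..<2*j+3] = [1..<2*j+2] @ [2*j+2]"
    using upt_Suc_append[of 1 "2*j+2"] by (simp add: numeral_3_eq_3)
  have s1: "tlcomm (map ?F [1..<2*j+3]) = tcomm ?T (tens c d)"
    unfolding c_def d_def u map_append list.map by (rule tlcomm_snoc) simp
  have e1: "tens_eq sG sH (tlcomm (map ?F [1..<2*j+3])) (fsub (tens (P*a1*c) (Q*d)) (tens (c*(P*a1)) (d*Q)))"
    unfolding s1 by (rule tcomm_step[OF algG algH IH[folded P_def Q_def a1_def] fin])
  have cP: "c*P = P*c" unfolding P_def using PP_central[OF nilG] by simp
  have h1: "c*(P*a1) = P*(c*a1)" by (simp add: mult.assoc[symmetric] cP)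
  have h2: "d*Q = Q*d" unfolding Q_def using QQ_central[OF nilH] by simp
  have e2: "tens_eq sG sH (fsub (tens (P*a1*c) (Q*d)) (tens (c*(P*a1)) (d*Q))) (tens (P*a1*c - P*(c*a1)) (Q*d))"
    unfolding h1 h2 by (rule R2)
  have eq: "P*a1*c - P*(c*a1) = PP a (j+1)"
    unfolding PP_Suc P_def a1_def c_def rcomm_def by (simp add: algebra_simps)
  have "tens_eq sG sH (tlcomm (map ?F [1..<2*j+3])) (tens (PP a (j+1)) (Q*d))"
    using te_trans[OF e1 e2] unfolding eq .
  moreover have "finite (fsupp (tlcomm (map ?F [1..<2*j+3])))"
    unfolding s1 by (rule fin_tcomm[OF fin])
  ultimately show ?thesis unfolding Q_def d_def by simp
qed

lemma stepEO:
  fixes sG :: "'f::field \<Rightarrow> 'g::ring_1 \<Rightarrow> 'g" and sH :: "'f \<Rightarrow> 'h::ring_1 \<Rightarrow> 'h"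
    and a :: "nat \<Rightarrow> 'g" and b :: "nat \<Rightarrow> 'h"
  assumes algG: "is_algebra sG" and algH: "is_algebra sH"
    and nilG: "\<forall>a b c :: 'g. rcomm (rcomm a b) c = 0"
    and nilH: "\<forall>a b c :: 'h. rcomm (rcomm a b) c = 0"
    and IH: "tens_eq sG sH (tlcomm (map (\<lambda>i. tens (a i) (b i)) [1..<2*j+3]) :: 'g \<times> 'h \<Rightarrow> 'f)
               (tens (PP a (j+1)) (QQ b j * b (2*j+2)))"
    and fin: "finite (fsupp (tlcomm (map (\<lambda>i. tens (a i) (b i)) [1..<2*j+3]) :: 'g \<times> 'h \<Rightarrow> 'f))"
  shows "tens_eq sG sH (tlcomm (map (\<lambda>i. tens (a i) (b i)) [1..<2*(j+1)+2]) :: 'g \<times> 'h \<Rightarrow> 'f)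
               (tens (PP a (j+1) * a (2*(j+1)+1)) (QQ b (j+1)))
     \<and> finite (fsupp (tlcomm (map (\<lambda>i. tens (a i) (b i)) [1..<2*(j+1)+2]) :: 'g \<times> 'h \<Rightarrow> 'f))"
proof -
  let ?F = "\<lambda>i. tens (a i) (b i) :: 'g \<times> 'h \<Rightarrow> 'f"
  let ?T = "tlcomm (map ?F [1..<2*j+3])"
  define P where "P = PP a (j+1)"
  define Q where "Q = QQ b j"
  define d1 where "d1 = b (2*j+2)"
  define c where "c = a (2*j+3)"
  define d where "d = b (2*j+3)"
  have u: "[1..<2*(j+1)+2] = [1..<2*j+3] @ [2*j+3]"
    using upt_Suc_append[of 1 "2*j+3"] by (simp add: numeral_3_eq_3)
  have s1: "tlcomm (map ?F [1..<2*(j+1)+2]) = tcomm ?T (tens c d)"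
    unfolding c_def d_def u map_append list.map by (rule tlcomm_snoc) simp
  have e1: "tens_eq sG sH (tlcomm (map ?F [1..<2*(j+1)+2])) (fsub (tens (P*c) (Q*d1*d)) (tens (c*P) (d*(Q*d1))))"
    unfolding s1 by (rule tcomm_step[OF algG algH IH[folded P_def Q_def d1_def] fin])
  have h1: "c*P = P*c" unfolding P_def using PP_central[OF nilG] by simp
  have dQ: "d*Q = Q*d" unfolding Q_def using QQ_central[OF nilH] by simp
  have h2: "d*(Q*d1) = Q*(d*d1)" by (simp add: mult.assoc[symmetric] dQ)
  have e2: "tens_eq sG sH (fsub (tens (P*c) (Q*d1*d)) (tens (c*P) (d*(Q*d1)))) (tens (P*c) (Q*d1*d - Q*(d*d1)))"
    unfolding h1 h2 by (rule R1)
  have eq: "Q*d1*d - Q*(d*d1) = QQ b (j+1)"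
    unfolding QQ_Suc Q_def d1_def d_def rcomm_def by (simp add: algebra_simps)
  have "tens_eq sG sH (tlcomm (map ?F [1..<2*(j+1)+2])) (tens (P*c) (QQ b (j+1)))"
    using te_trans[OF e1 e2] unfolding eq .
  moreover have "finite (fsupp (tlcomm (map ?F [1..<2*(j+1)+2])))"
    unfolding s1 by (rule fin_tcomm[OF fin])
  moreover have "c = a (2*(j+1)+1)" unfolding c_def by (simp add: numeral_3_eq_3)
  ultimately show ?thesis unfolding P_def by simp
qed

lemma mainO:
  fixes sG :: "'f::field \<Rightarrow> 'g::ring_1 \<Rightarrow> 'g" and sH :: "'f \<Rightarrow> 'h::ring_1 \<Rightarrow> 'h"
    and a :: "nat \<Rightarrow> 'g" and b :: "nat \<Rightarrow> 'h"
  assumes algG: "is_algebra sG" and algH: "is_algebra sH"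
    and nilG: "\<forall>a b c :: 'g. rcomm (rcomm a b) c = 0"
    and nilH: "\<forall>a b c :: 'h. rcomm (rcomm a b) c = 0"
    and b1: "b 1 = 1"
  shows "tens_eq sG sH (tlcomm (map (\<lambda>i. tens (a i) (b i)) [1..<2*j+2]) :: 'g \<times> 'h \<Rightarrow> 'f)
               (tens (PP a j * a (2*j+1)) (QQ b j))
     \<and> finite (fsupp (tlcomm (map (\<lambda>i. tens (a i) (b i)) [1..<2*j+2]) :: 'g \<times> 'h \<Rightarrow> 'f))"
proof (induction j)
  case 0
  have "b (Suc 0) = 1" using b1 by simp
  then show ?case by (simp add: PP_0 QQ_0 tlcomm_def te_refl)
next
  case (Suc j)
  have "tens_eq sG sH (tlcomm (map (\<lambda>i. tens (a i) (b i)) [1..<2*(j+1)+2]) :: 'g \<times> 'h \<Rightarrow> 'f)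
               (tens (PP a (j+1) * a (2*(j+1)+1)) (QQ b (j+1)))
     \<and> finite (fsupp (tlcomm (map (\<lambda>i. tens (a i) (b i)) [1..<2*(j+1)+2]) :: 'g \<times> 'h \<Rightarrow> 'f))"
    using stepOE[OF algG algH nilG nilH conjunct1[OF Suc] conjunct2[OF Suc]]
    by (intro stepEO[OF algG algH nilG nilH]) auto
  then show ?case by simp
qed

theorem corollary2p3:
  fixes sG :: "'f::field \<Rightarrow> 'g::ring_1 \<Rightarrow> 'g"
    and sH :: "'f \<Rightarrow> 'h::ring_1 \<Rightarrow> 'h"
    and g g' :: "nat \<Rightarrow> 'g" and h h' :: "nat \<Rightarrow> 'h"
    and m' n' :: nat
  assumes algG: "is_algebra sG"
    and algH: "is_algebra sH"
    and nilG: "\<forall>a b c :: 'g. rcomm (rcomm a b) c = 0"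
    and nilH: "\<forall>a b c :: 'h. rcomm (rcomm a b) c = 0"
    and m: "m' \<ge> 1" and n: "n' \<ge> 1"
  shows "tens_eq sG sH
           (tlcomm (map (\<lambda>i. if i = 1 \<or> i = 2 * m' then tens (g i) 1 else tens (g i) (h i))
                        [1..<2 * m' + 1]))
           (tens (prod_list (map (\<lambda>k. rcomm (g (2 * k - 1)) (g (2 * k))) [1..<m' + 1]))
                 (prod_list (map (\<lambda>k. rcomm (h (2 * k)) (h (2 * k + 1))) [1..<m'])))
       \<and> tens_eq sG sH
           (tlcomm (map (\<lambda>j. if j = 1 then tens (g' j) 1 else tens (g' j) (h' j))
                        [1..<2 * n' + 2]))
           (tens (prod_list (map (\<lambda>k. rcomm (g' (2 * k - 1)) (g' (2 * k))) [1..<n' + 1])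
                    * g' (2 * n' + 1))
                 (prod_list (map (\<lambda>k. rcomm (h' (2 * k)) (h' (2 * k + 1))) [1..<n' + 1])))"
proof
  obtain j where j: "m' = j + 1" using m by (metis add.commute le_Suc_ex)
  define b where "b i = (if i = 1 \<or> i = 2 * m' then 1 else h i)" for i
  have b1: "b 1 = 1" unfolding b_def by simp
  have mapeq: "map (\<lambda>i. if i = 1 \<or> i = 2 * m' then tens (g i) 1 else tens (g i) (h i)) [1..<2 * m' + 1]
      = (map (\<lambda>i. tens (g i) (b i)) [1..<2*j+3] :: ('g \<times> 'h \<Rightarrow> 'f) list)"
    unfolding b_def j by (auto intro!: map_cong simp: numeral_3_eq_3)
  have O: "tens_eq sG sH (tlcomm (map (\<lambda>i. tens (g i) (b i)) [1..<2*j+2]) :: 'g \<times> 'h \<Rightarrow> 'f)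
               (tens (PP g j * g (2*j+1)) (QQ b j))
     \<and> finite (fsupp (tlcomm (map (\<lambda>i. tens (g i) (b i)) [1..<2*j+2]) :: 'g \<times> 'h \<Rightarrow> 'f))"
    by (rule mainO[where sG=sG and sH=sH and a=g and b=b, OF algG algH nilG nilH b1])
  have E: "tens_eq sG sH (tlcomm (map (\<lambda>i. tens (g i) (b i)) [1..<2*j+3]) :: 'g \<times> 'h \<Rightarrow> 'f)
               (tens (PP g (j+1)) (QQ b j * b (2*j+2)))"
    using stepOE[where sG=sG and sH=sH and a=g and b=b, OF algG algH nilG nilH conjunct1[OF O] conjunct2[OF O]] by blast
  have "b (2*j+2) = 1" unfolding b_def j by simp
  moreover have "PP g (j+1) = prod_list (map (\<lambda>k. rcomm (g (2 * k - 1)) (g (2 * k))) [1..<m' + 1])"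
    unfolding PP_def j ..
  moreover have "QQ b j = prod_list (map (\<lambda>k. rcomm (h (2 * k)) (h (2 * k + 1))) [1..<m'])"
    unfolding QQ_def j b_def by (intro arg_cong[where f=prod_list] map_cong refl) auto
  ultimately show "tens_eq sG sH
           (tlcomm (map (\<lambda>i. if i = 1 \<or> i = 2 * m' then tens (g i) 1 else tens (g i) (h i))
                        [1..<2 * m' + 1]))
           (tens (prod_list (map (\<lambda>k. rcomm (g (2 * k - 1)) (g (2 * k))) [1..<m' + 1]))
                 (prod_list (map (\<lambda>k. rcomm (h (2 * k)) (h (2 * k + 1))) [1..<m'])))"
    using E unfolding mapeq by simp
next
  define b where "b i = (if i = 1 then 1 else h' i)" for i
  have b1: "b 1 = 1" unfolding b_def by simp
  have mapeq: "map (\<lambda>j. if j = 1 then tens (g' j) 1 else tens (g' j) (h' j)) [1..<2 * n' + 2]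
      = (map (\<lambda>i. tens (g' i) (b i)) [1..<2*n'+2] :: ('g \<times> 'h \<Rightarrow> 'f) list)"
    unfolding b_def by (auto intro!: map_cong)
  have O: "tens_eq sG sH (tlcomm (map (\<lambda>i. tens (g' i) (b i)) [1..<2*n'+2]) :: 'g \<times> 'h \<Rightarrow> 'f)
               (tens (PP g' n' * g' (2*n'+1)) (QQ b n'))"
    using mainO[where sG=sG and sH=sH and a=g' and b=b and j=n', OF algG algH nilG nilH b1] by blast
  moreover have "QQ b n' = prod_list (map (\<lambda>k. rcomm (h' (2 * k)) (h' (2 * k + 1))) [1..<n' + 1])"
    unfolding QQ_def b_def by (intro arg_cong[where f=prod_list] map_cong refl) auto
  ultimately show "tens_eq sG sH
           (tlcomm (map (\<lambda>j. if j = 1 then tens (g' j) 1 else tens (g' j) (h' j))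
                        [1..<2 * n' + 2]))
           (tens (prod_list (map (\<lambda>k. rcomm (g' (2 * k - 1)) (g' (2 * k))) [1..<n' + 1])
                    * g' (2 * n' + 1))
                 (prod_list (map (\<lambda>k. rcomm (h' (2 * k)) (h' (2 * k + 1))) [1..<n' + 1])))"
    unfolding mapeq PP_def by simp
qed

end
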